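(* Let $\mathcal{Z}=\mathcal{X}\times\mathcal{Y}$ with a probability distribution, let $\mathcal{H}$ be a class of bounded real-valued functions $h:\mathcal{X}\times\mathcal{X}\to\mathbb{R}$, let $Y:\mathcal{Y}\times\mathcal{Y}\to\mathbb{R}$ be either $Y(y,y')=y-y'$ or $Y(y,y')=yy'$, with $Y:=\sup_{y,y'\in\mathcal{Y}}|Y(y,y')|<\infty$, and let $\phi:\mathbb{R}\to\mathbb{R}$ be $L$-Lipschitz. Define the loss $\ell(h,z,z')=\phi(h(x,x')Y(y,y'))$ for $z=(x,y),z'=(x',y')$. Then \[ \mathcal{R}_n(\ell\circ\mathcal{H})\le LY\,\mathcal{R}_n(\mathcal{H}). \]
   Context: $\ell\circ\mathcal{H}=\{(z,z')\mapsto\ell(h,z,z'):h\in\mathcal{H}\}$. For a class $\mathcal{G}$ of functions of pairs, $\mathcal{R}_n(\mathcal{G})=\mathbb{E}\left[\sup_{g\in\mathcal{G}}\frac1n\sum_{i=1}^n\epsilon_i g(z,z_i)\right]$, the expectation over i.i.d. Rademacher signs $\epsilon_i$ and i.i.d. $z,z_1,\dots,z_n$ from the distribution; for $\mathcal{H}$, $h(z,z_i)$ means $h(x,x_i)$. *)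

theory Defs
  imports "HOL-Analysis.Analysis" "HOL-Probability.Probability"
begin

definition sign_vectors :: "nat \<Rightarrow> (nat \<Rightarrow> real) set" where
  "sign_vectors n = PiE {..<n} (\<lambda>_. {-1, 1})"

definition cond_rademacher ::
    "nat \<Rightarrow> ('z \<Rightarrow> 'z \<Rightarrow> real) set \<Rightarrow> 'z \<Rightarrow> (nat \<Rightarrow> 'z) \<Rightarrow> ereal" where
  "cond_rademacher n G z zs =
     (\<Sum>\<sigma>\<in>sign_vectors n. (SUP g\<in>G. ereal ((1 / real n) * (\<Sum>i<n. \<sigma> i * g z (zs i)))))
       / ereal (real (card (sign_vectors n)))"

text \<open>The conditional average is always nonnegative for a
  nonempty class, so the expectation is taken as a nonnegative integral (values in [0,\<infinity>]).\<close>
definition rademacher ::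
    "nat \<Rightarrow> 'z measure \<Rightarrow> ('z \<Rightarrow> 'z \<Rightarrow> real) set \<Rightarrow> ennreal" where
  "rademacher n D G =
     (\<integral>\<^sup>+ p. e2ennreal (cond_rademacher n G (fst p) (snd p))
        \<partial>(D \<Otimes>\<^sub>M PiM {..<n} (\<lambda>_. D)))"

end

theory Submission imports Defs begin

lemma ereal_cmult_distrib:
  fixes a b :: ereal
  assumes "C \<ge> 0" "a \<noteq> -\<infinity>" "b \<noteq> -\<infinity>"
  shows "ereal C * (a + b) = ereal C * a + ereal C * b"
  using assms by (cases a; cases b) (auto simp: distrib_left)

lemma sum_not_MInfty:
  fixes R :: "'b \<Rightarrow> ereal"
  assumes "finite A" "\<And>s. s \<in> A \<Longrightarrow> R s \<noteq> -\<infinity>"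
  shows "(\<Sum>s\<in>A. R s) \<noteq> -\<infinity>"
  using assms by (induction A rule: finite_induct) auto

lemma ereal_cmult_sum:
  fixes R :: "'b \<Rightarrow> ereal"
  assumes "C \<ge> 0" "finite A" "\<And>s. s \<in> A \<Longrightarrow> R s \<noteq> -\<infinity>"
  shows "(\<Sum>s\<in>A. ereal C * R s) = ereal C * (\<Sum>s\<in>A. R s)"
  using assms(2,3)
proof (induction A rule: finite_induct)
  case empty then show ?case by simp
next
  case (insert x F)
  have "sum R F \<noteq> -\<infinity>" using insert by (intro sum_not_MInfty) auto
  then show ?case using insert assms(1) by (simp add: ereal_cmult_distrib)
qed

lemma nn_integral_cmult_le:
  fixes c :: real
  assumes c: "c \<ge> 0" and le: "\<And>x. x \<in> space M \<Longrightarrow> F x \<le> ennreal c * G x"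
  shows "integral\<^sup>N M F \<le> ennreal c * integral\<^sup>N M G"
proof -
  have 1: "integral\<^sup>N M F \<le> (\<integral>\<^sup>+x. ennreal c * G x \<partial>M)"
    by (rule nn_integral_mono) (rule le)
  show ?thesis
  proof (cases "c = 0")
    case True
    with 1 show ?thesis by simp
  next
    case False
    then have cp: "c > 0" using c by simp
    have "(\<integral>\<^sup>+x. ennreal c * G x \<partial>M) \<le> ennreal c * integral\<^sup>N M G"
      unfolding nn_integral_def
    proof (rule SUP_least)
      fix g assume g: "g \<in> {g. simple_function M g \<and> g \<le> (\<lambda>x. ennreal c * G x)}"
      define g' where "g' = (\<lambda>x. ennreal (1/c) * g x)"
      have sg': "simple_function M g'" unfolding g'_def using g by auto
      have "g' \<le> G"
      proof (rule le_funI)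
        fix x
        have "g' x \<le> ennreal (1/c) * (ennreal c * G x)"
          unfolding g'_def using g by (auto intro!: mult_left_mono simp: le_fun_def)
        also have "\<dots> = G x" using cp
          by (simp add: mult.assoc[symmetric] ennreal_mult[symmetric])
        finally show "g' x \<le> G x" .
      qed
      have geq: "g = (\<lambda>x. ennreal c * g' x)" unfolding g'_def using cp
        by (simp add: mult.assoc[symmetric] ennreal_mult[symmetric])
      have "integral\<^sup>S M g = ennreal c * integral\<^sup>S M g'"
        by (subst geq) (simp add: sg')
      also have "\<dots> \<le> ennreal c * (SUP g\<in>{g. simple_function M g \<and> g \<le> G}. integral\<^sup>S M g)"
        using sg' \<open>g' \<le> G\<close> by (intro mult_left_mono SUP_upper) auto
      finally show "integral\<^sup>S M g \<le> ennreal c * (SUP g\<in>{g. simple_function M g \<and> g \<le> G}. integral\<^sup>S M g)" .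
    qed
    with 1 show ?thesis by simp
  qed
qed

lemma final_step:
  fixes X Y :: ereal
  assumes k: "k > 0" and C: "C \<ge> 0" and le: "X \<le> ereal C * Y"
  shows "e2ennreal (X / ereal k) \<le> ennreal C * e2ennreal (Y / ereal k)"
proof (cases "Y \<le> 0")
  case True
  then have "ereal C * Y \<le> 0" using C by (simp add: ereal_mult_le_0_iff)
  then have "X \<le> 0" using le by simp
  then have "X / ereal k \<le> 0" using k by (cases X) (auto simp: divide_nonpos_pos)
  then show ?thesis by (simp add: e2ennreal_neg)
next
  case False
  have "X / ereal k \<le> (ereal C * Y) / ereal k" using le k by (simp add: ereal_divide_right_mono)
  also have "\<dots> = ereal C * (Y / ereal k)" by (simp add: ereal_times_divide_eq)
  finally have "e2ennreal (X / ereal k) \<le> e2ennreal (ereal C * (Y / ereal k))" by (rule e2ennreal_mono)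
  also have "\<dots> = ennreal C * e2ennreal (Y / ereal k)"
    using False k C by (cases Y) (auto simp: ennreal_mult'[symmetric] mult_divide_mult_cancel_left_if times_divide_eq_right)
  finally show ?thesis .
qed


lemma sign_vectors_Suc:
  "sign_vectors (Suc n) = (\<lambda>(y, g). g(n := y)) ` ({-1, 1} \<times> sign_vectors n)"
  unfolding sign_vectors_def lessThan_Suc by (rule PiE_insert_eq)

lemma finite_sign_vectors: "finite (sign_vectors n)"
  unfolding sign_vectors_def by (rule finite_PiE) auto

lemma sum_sign_vectors_Suc:
  fixes f :: "(nat \<Rightarrow> real) \<Rightarrow> 'b::comm_monoid_add"
  shows "(\<Sum>\<sigma>\<in>sign_vectors (Suc n). f \<sigma>) = (\<Sum>\<sigma>\<in>sign_vectors n. f (\<sigma>(n := 1)) + f (\<sigma>(n := -1)))"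
proof -
  have inj: "inj_on (\<lambda>(y, g). g(n := y)) ({-1::real, 1} \<times> sign_vectors n)"
  proof (rule inj_onI, clarsimp)
    fix y g y' g'
    assume "g \<in> sign_vectors n" "g' \<in> sign_vectors n" and eq: "g(n := y) = g'(n := y')"
    then have "g n = undefined" "g' n = undefined" unfolding sign_vectors_def by (auto simp: PiE_def extensional_def)
    moreover have "y = y'" using fun_cong[OF eq, of n] by simp
    moreover have "\<And>i. i \<noteq> n \<Longrightarrow> g i = g' i" using eq by (metis fun_upd_other)
    ultimately show "y = y' \<and> g = g'" by (metis ext)
  qed
  have "(\<Sum>\<sigma>\<in>sign_vectors (Suc n). f \<sigma>) = (\<Sum>(y, g)\<in>{-1::real, 1} \<times> sign_vectors n. f (g(n := y)))"
    unfolding sign_vectors_Suc by (subst sum.reindex[OF inj]) (simp add: comp_def case_prod_unfold)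
  also have "\<dots> = (\<Sum>y\<in>{-1::real, 1}. \<Sum>g\<in>sign_vectors n. f (g(n := y)))"
    by (subst sum.cartesian_product) simp
  also have "\<dots> = (\<Sum>g\<in>sign_vectors n. f (g(n := 1))) + (\<Sum>g\<in>sign_vectors n. f (g(n := -1)))"
    by (simp add: add.commute)
  also have "\<dots> = (\<Sum>\<sigma>\<in>sign_vectors n. f (\<sigma>(n := 1)) + f (\<sigma>(n := -1)))"
    by (simp add: sum.distrib)
  finally show ?thesis .
qed

lemma two_point:
  fixes A v :: "'a \<Rightarrow> real" and \<psi> :: "real \<Rightarrow> real"
  assumes T: "T \<noteq> {}" and lip: "\<And>x y. \<bar>\<psi> x - \<psi> y\<bar> \<le> c * \<bar>x - y\<bar>"
  shows "(SUP t\<in>T. ereal (A t + \<psi> (v t))) + (SUP t\<in>T. ereal (A t - \<psi> (v t)))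
       \<le> (SUP t\<in>T. ereal (A t + c * v t)) + (SUP t\<in>T. ereal (A t - c * v t))"
    (is "?L1 + ?L2 \<le> ?R")
proof -
  have key: "ereal (A t + \<psi> (v t)) + ereal (A s - \<psi> (v s)) \<le> ?R" if "t \<in> T" "s \<in> T" for t s
  proof -
    have b: "A t + \<psi> (v t) + (A s - \<psi> (v s)) \<le> A t + A s + c * \<bar>v t - v s\<bar>"
      using lip[of "v t" "v s"] by linarith
    show ?thesis
    proof (cases "v t \<ge> v s")
      case True
      then have "A t + \<psi> (v t) + (A s - \<psi> (v s)) \<le> (A t + c * v t) + (A s - c * v s)"
        using b by (simp add: right_diff_distrib)
      then have "ereal (A t + \<psi> (v t)) + ereal (A s - \<psi> (v s)) \<le> ereal (A t + c * v t) + ereal (A s - c * v s)"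
        by simp
      also have "\<dots> \<le> ?R" using that by (intro add_mono SUP_upper)
      finally show ?thesis .
    next
      case False
      then have "A t + \<psi> (v t) + (A s - \<psi> (v s)) \<le> (A s + c * v s) + (A t - c * v t)"
        using b by (simp add: right_diff_distrib)
      then have "ereal (A t + \<psi> (v t)) + ereal (A s - \<psi> (v s)) \<le> ereal (A s + c * v s) + ereal (A t - c * v t)"
        by simp
      also have "\<dots> \<le> ?R" using that by (intro add_mono SUP_upper)
      finally show ?thesis .
    qed
  qed
  have L2: "?L2 \<noteq> -\<infinity>"
  proof -
    obtain t0 where "t0 \<in> T" using T by auto
    then have "ereal (A t0 - \<psi> (v t0)) \<le> ?L2" by (rule SUP_upper)
    then show ?thesis by auto
  qed
  have "ereal (A t + \<psi> (v t)) + ?L2 \<le> ?R" if "t \<in> T" for t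
  proof -
    have "ereal (A t + \<psi> (v t)) + ?L2 = (SUP s\<in>T. ereal (A t + \<psi> (v t)) + ereal (A s - \<psi> (v s)))"
      using T by (subst SUP_ereal_add_right) auto
    also have "\<dots> \<le> ?R" using key that by (auto intro: SUP_least)
    finally show ?thesis .
  qed
  then have "(SUP t\<in>T. ereal (A t + \<psi> (v t)) + ?L2) \<le> ?R" by (auto intro: SUP_least)
  then show ?thesis using T L2 by (subst (asm) SUP_ereal_add_left) auto
qed


lemma contraction:
  fixes T :: "'a set" and a :: "'a \<Rightarrow> real" and u :: "nat \<Rightarrow> 'a \<Rightarrow> real"
    and \<psi> :: "nat \<Rightarrow> real \<Rightarrow> real"
  assumes T: "T \<noteq> {}" and lip: "\<And>i x y. i < n \<Longrightarrow> \<bar>\<psi> i x - \<psi> i y\<bar> \<le> c * \<bar>x - y\<bar>"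
  shows "(\<Sum>\<sigma>\<in>sign_vectors n. SUP t\<in>T. ereal (a t + (\<Sum>i<n. \<sigma> i * \<psi> i (u i t))))
       \<le> (\<Sum>\<sigma>\<in>sign_vectors n. SUP t\<in>T. ereal (a t + (\<Sum>i<n. \<sigma> i * (c * u i t))))"
  using lip
proof (induction n arbitrary: a)
  case 0
  then show ?case by simp
next
  case (Suc n)
  let ?A = "\<lambda>\<sigma> t. a t + (\<Sum>i<n. \<sigma> i * \<psi> i (u i t))"
  let ?B = "\<lambda>\<sigma> t. a t + (\<Sum>i<n. \<sigma> i * (c * u i t))"
  have eqL: "(\<Sum>i<Suc n. (\<sigma>(n := s)) i * \<psi> i (u i t)) = (\<Sum>i<n. \<sigma> i * \<psi> i (u i t)) + s * \<psi> n (u n t)"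
    for \<sigma> s t by simp
  have eqR: "(\<Sum>i<Suc n. (\<sigma>(n := s)) i * (c * u i t)) = (\<Sum>i<n. \<sigma> i * (c * u i t)) + s * (c * u n t)"
    for \<sigma> s t by simp
  have "(\<Sum>\<sigma>\<in>sign_vectors (Suc n). SUP t\<in>T. ereal (a t + (\<Sum>i<Suc n. \<sigma> i * \<psi> i (u i t))))
      = (\<Sum>\<sigma>\<in>sign_vectors n. (SUP t\<in>T. ereal (?A \<sigma> t + \<psi> n (u n t))) + (SUP t\<in>T. ereal (?A \<sigma> t - \<psi> n (u n t))))"
    by (subst sum_sign_vectors_Suc) (simp only: eqL, simp add: algebra_simps)
  also have "\<dots> \<le> (\<Sum>\<sigma>\<in>sign_vectors n. (SUP t\<in>T. ereal (?A \<sigma> t + c * u n t)) + (SUP t\<in>T. ereal (?A \<sigma> t - c * u n t)))"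
    by (intro sum_mono two_point[OF T] Suc.prems) simp
  also have "\<dots> = (\<Sum>\<sigma>\<in>sign_vectors n. SUP t\<in>T. ereal ((a t + c * u n t) + (\<Sum>i<n. \<sigma> i * \<psi> i (u i t))))
      + (\<Sum>\<sigma>\<in>sign_vectors n. SUP t\<in>T. ereal ((a t - c * u n t) + (\<Sum>i<n. \<sigma> i * \<psi> i (u i t))))"
    by (simp add: sum.distrib algebra_simps)
  also have "\<dots> \<le> (\<Sum>\<sigma>\<in>sign_vectors n. SUP t\<in>T. ereal ((a t + c * u n t) + (\<Sum>i<n. \<sigma> i * (c * u i t))))
      + (\<Sum>\<sigma>\<in>sign_vectors n. SUP t\<in>T. ereal ((a t - c * u n t) + (\<Sum>i<n. \<sigma> i * (c * u i t))))"
    by (intro add_mono Suc.IH) (simp_all add: Suc.prems)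
  also have "\<dots> = (\<Sum>\<sigma>\<in>sign_vectors (Suc n). SUP t\<in>T. ereal (a t + (\<Sum>i<Suc n. \<sigma> i * (c * u i t))))"
    by (subst sum_sign_vectors_Suc) (simp only: eqR, simp add: sum.distrib algebra_simps)
  finally show ?case .
qed


lemma sum_MInfty_const:
  assumes "finite A" "A \<noteq> {}"
  shows "(\<Sum>s\<in>A. (-\<infinity>::ereal)) = -\<infinity>"
  using assms by (induction A rule: finite_ne_induct) auto

theorem theorem7:
  fixes D :: "('x \<times> real) measure"
    and X :: "'x set" and Ys :: "real set"
    and H :: "('x \<Rightarrow> 'x \<Rightarrow> real) set"
    and Yf :: "real \<Rightarrow> real \<Rightarrow> real"
    and \<phi> :: "real \<Rightarrow> real" and L :: real and n :: nat
  assumes "prob_space D"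
    and "space D = X \<times> Ys"
    and "\<forall>h\<in>H. \<exists>M. \<forall>x\<in>X. \<forall>x'\<in>X. \<bar>h x x'\<bar> \<le> M"
    and "Yf = (\<lambda>y y'. y - y') \<or> Yf = (\<lambda>y y'. y * y')"
    and "bdd_above ((\<lambda>(y, y'). \<bar>Yf y y'\<bar>) ` (Ys \<times> Ys))"
    and "L-lipschitz_on UNIV \<phi>"
  shows "rademacher n D ((\<lambda>h z z'. \<phi> (h (fst z) (fst z') * Yf (snd z) (snd z'))) ` H)
           \<le> ennreal (L * (SUP (y, y')\<in>Ys \<times> Ys. \<bar>Yf y y'\<bar>))
             * rademacher n D ((\<lambda>h z z'. h (fst z) (fst z')) ` H)"
proof -
  define S where "S = (SUP (y, y')\<in>Ys \<times> Ys. \<bar>Yf y y'\<bar>)"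
  define C where "C = L * S"
  define N where "N = real n"
  define k where "k = real (card (sign_vectors n))"
  let ?F = "(\<lambda>h z z'. \<phi> (h (fst z) (fst z') * Yf (snd z) (snd z'))) ` H"
  let ?G = "(\<lambda>h z z'. h (fst z) (fst z')) ` H"
  have "space D \<noteq> {}" using assms(1) prob_space.not_empty by blast
  then have Ysne: "Ys \<noteq> {}" using assms(2) by auto
  have L0: "L \<ge> 0" and Llip: "\<And>a b. \<bar>\<phi> a - \<phi> b\<bar> \<le> L * \<bar>a - b\<bar>"
    using assms(6) by (auto simp: lipschitz_on_def dist_real_def)
  have Sb: "\<bar>Yf y y'\<bar> \<le> S" if "y \<in> Ys" "y' \<in> Ys" for y y'
  proof -
    have "(\<lambda>(y, y'). \<bar>Yf y y'\<bar>) (y, y') \<le> S"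
      unfolding S_def using that assms(5) by (intro cSUP_upper) auto
    then show ?thesis by simp
  qed
  have S0: "S \<ge> 0" using Ysne Sb by (meson abs_ge_zero order_trans ex_in_conv)
  have C0: "C \<ge> 0" unfolding C_def using L0 S0 by simp
  have fin: "finite (sign_vectors n)" by (rule finite_sign_vectors)
  have cardsv: "card (sign_vectors n) = 2 ^ n"
    unfolding sign_vectors_def by (subst card_PiE) (auto simp: numeral_2_eq_2)
  have k0: "k > 0" unfolding k_def cardsv by simp
  have svne: "sign_vectors n \<noteq> {}" using cardsv by (metis card.empty power_not_zero zero_neq_numeral)
  have point: "e2ennreal (cond_rademacher n ?F z zs) \<le> ennreal C * e2ennreal (cond_rademacher n ?G z zs)"
    if z: "z \<in> X \<times> Ys" and zs: "\<And>i. i < n \<Longrightarrow> zs i \<in> X \<times> Ys" for z zs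
  proof -
    define Xv where "Xv = (\<Sum>\<sigma>\<in>sign_vectors n. SUP g\<in>?F. ereal ((1 / real n) * (\<Sum>i<n. \<sigma> i * g z (zs i))))"
    define Yv where "Yv = (\<Sum>\<sigma>\<in>sign_vectors n. SUP g\<in>?G. ereal ((1 / real n) * (\<Sum>i<n. \<sigma> i * g z (zs i))))"
    have "Xv \<le> ereal C * Yv"
    proof (cases "H = {}")
      case True
      have "Xv = (\<Sum>\<sigma>\<in>sign_vectors n. -\<infinity>)" unfolding Xv_def True by (simp add: bot_ereal_def)
      also have "\<dots> = -\<infinity>" by (rule sum_MInfty_const[OF fin svne])
      finally show ?thesis by simp
    next
      case False
      define \<psi> where "\<psi> = (\<lambda>i t. \<phi> (t * Yf (snd z) (snd (zs i))) / N)"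
      define u where "u = (\<lambda>i (h::'x \<Rightarrow> 'x \<Rightarrow> real). h (fst z) (fst (zs i)))"
      have lip: "\<bar>\<psi> i a - \<psi> i b\<bar> \<le> (C / N) * \<bar>a - b\<bar>" if "i < n" for i a b
      proof -
        let ?Y = "Yf (snd z) (snd (zs i))"
        have Yb: "\<bar>?Y\<bar> \<le> S" using z zs[OF that] by (intro Sb) auto
        have "\<bar>\<phi> (a * ?Y) - \<phi> (b * ?Y)\<bar> \<le> L * \<bar>a * ?Y - b * ?Y\<bar>" by (rule Llip)
        also have "\<dots> = L * (\<bar>?Y\<bar> * \<bar>a - b\<bar>)" by (simp add: left_diff_distrib[symmetric] abs_mult)
        also have "\<dots> \<le> L * (S * \<bar>a - b\<bar>)" using L0 Yb by (intro mult_left_mono mult_right_mono) auto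
        finally have "\<bar>\<phi> (a * ?Y) - \<phi> (b * ?Y)\<bar> \<le> C * \<bar>a - b\<bar>" by (simp add: C_def mult.assoc)
        then have "\<bar>\<phi> (a * ?Y) - \<phi> (b * ?Y)\<bar> / N \<le> C * \<bar>a - b\<bar> / N"
          by (simp add: N_def divide_right_mono)
        moreover have "\<bar>N\<bar> = N" by (simp add: N_def)
        ultimately show ?thesis by (simp add: \<psi>_def diff_divide_distrib[symmetric] abs_divide)
      qed
      have "Xv = (\<Sum>\<sigma>\<in>sign_vectors n. SUP h\<in>H. ereal (0 + (\<Sum>i<n. \<sigma> i * \<psi> i (u i h))))"
        unfolding Xv_def \<psi>_def u_def N_def
        by (intro sum.cong refl) (simp add: image_comp sum_distrib_left)
      also have "\<dots> \<le> (\<Sum>\<sigma>\<in>sign_vectors n. SUP h\<in>H. ereal (0 + (\<Sum>i<n. \<sigma> i * ((C / N) * u i h))))"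
        by (rule contraction[OF False lip])
      also have "\<dots> \<le> (\<Sum>\<sigma>\<in>sign_vectors n. ereal C * (SUP g\<in>?G. ereal ((1 / real n) * (\<Sum>i<n. \<sigma> i * g z (zs i)))))"
      proof (intro sum_mono SUP_least)
        fix \<sigma> h assume h: "h \<in> H"
        have "ereal (0 + (\<Sum>i<n. \<sigma> i * ((C / N) * u i h)))
            = ereal C * ereal ((1 / real n) * (\<Sum>i<n. \<sigma> i * h (fst z) (fst (zs i))))"
          by (simp add: u_def N_def sum_distrib_left algebra_simps)
        also have "\<dots> \<le> ereal C * (SUP g\<in>?G. ereal ((1 / real n) * (\<Sum>i<n. \<sigma> i * g z (zs i))))"
          using C0 h by (intro ereal_mult_left_mono SUP_upper2[of "\<lambda>z z'. h (fst z) (fst z')"]) auto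
        finally show "ereal (0 + (\<Sum>i<n. \<sigma> i * ((C / N) * u i h)))
            \<le> ereal C * (SUP g\<in>?G. ereal ((1 / real n) * (\<Sum>i<n. \<sigma> i * g z (zs i))))" .
      qed
      also have "\<dots> = ereal C * Yv"
        unfolding Yv_def
      proof (rule ereal_cmult_sum[OF C0 fin])
        fix \<sigma>
        obtain h where h: "h \<in> H" using False by auto
        have "ereal ((1 / real n) * (\<Sum>i<n. \<sigma> i * h (fst z) (fst (zs i))))
              \<le> (SUP g\<in>?G. ereal ((1 / real n) * (\<Sum>i<n. \<sigma> i * g z (zs i))))"
          using h by (intro SUP_upper2[of "\<lambda>z z'. h (fst z) (fst z')"]) auto
        then show "(SUP g\<in>?G. ereal ((1 / real n) * (\<Sum>i<n. \<sigma> i * g z (zs i)))) \<noteq> -\<infinity>" by auto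
      qed
      finally show ?thesis .
    qed
    then have "e2ennreal (Xv / ereal k) \<le> ennreal C * e2ennreal (Yv / ereal k)"
      by (rule final_step[OF k0 C0])
    then show ?thesis unfolding cond_rademacher_def Xv_def Yv_def k_def .
  qed
  show ?thesis
    unfolding rademacher_def S_def[symmetric] C_def[symmetric]
  proof (rule nn_integral_cmult_le[OF C0])
    fix p assume "p \<in> space (D \<Otimes>\<^sub>M PiM {..<n} (\<lambda>_. D))"
    then have "fst p \<in> X \<times> Ys" "\<And>i. i < n \<Longrightarrow> snd p i \<in> X \<times> Ys"
      using assms(2) by (auto simp: space_pair_measure space_PiM PiE_def Pi_def)
    then show "e2ennreal (cond_rademacher n ?F (fst p) (snd p)) \<le> ennreal C * e2ennreal (cond_rademacher n ?G (fst p) (snd p))"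
      by (rule point)
  qed
qed

end
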